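(* The monic irreducible polynomials over the sign hyperfield $\mathbb S$ are exactly $T$, $T-1$, $T+1$ and $T^2+1$. Consequently every irreducible polynomial over $\mathbb S$ is $\pm$ one of these.
   Context: The sign hyperfield $\mathbb S$ is $\{0,1,-1\}$ with the usual multiplication and hyperaddition $0\boxplus a=\{a\}$, $1\boxplus1=\{1\}$, $(-1)\boxplus(-1)=\{-1\}$, $1\boxplus(-1)=\{0,1,-1\}$. Iterated sums: $\boxplus_{i=1}^n a_i=\bigcup_{b\in\boxplus_{i=1}^{n-1}a_i} b\boxplus a_n$. A polynomial over $\mathbb S$ is a finitely supported sequence $(c_i)$ in $\mathbb S$, written $\sum c_iT^i$, of degree the largest $k$ with $c_k\ne0$; monic means $c_{\deg p}=1$. Hyperproduct: $p\boxdot q=\{\sum e_iT^i : e_i\in \boxplus_{k+l=i} c_kd_l\}$. $p\sim q$ means $p\in a\boxdot q$ for some $a\in\{\pm1\}$. $p$ is irreducible if $\deg p\ge1$ and $p\in q_1\boxdot q_2$ implies $p\sim q_1$ or $p\sim q_2$. *)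

theory Defs
  imports Main
begin

text \<open>The sign hyperfield S = {0, 1, -1}.\<close>
datatype sgn = SZ | SP | SN

fun smul :: "sgn \<Rightarrow> sgn \<Rightarrow> sgn" where
  "smul SZ b = SZ"
| "smul a SZ = SZ"
| "smul SP b = b"
| "smul SN SP = SN"
| "smul SN SN = SP"

fun hadd :: "sgn \<Rightarrow> sgn \<Rightarrow> sgn set" where
  "hadd SZ b = {b}"
| "hadd a SZ = {a}"
| "hadd SP SP = {SP}"
| "hadd SN SN = {SN}"
| "hadd SP SN = {SZ, SP, SN}"
| "hadd SN SP = {SZ, SP, SN}"

text \<open>Iterated hypersum of a list a_1,...,a_n:
  sum_{i=1}^n a_i = union over b in sum_{i=1}^{n-1} a_i of b + a_n (empty sum = {0}).\<close>
fun hsum_rev :: "sgn list \<Rightarrow> sgn set" where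
  "hsum_rev [] = {SZ}"
| "hsum_rev (a # xs) = (\<Union>b\<in>hsum_rev xs. hadd b a)"

definition hsum :: "sgn list \<Rightarrow> sgn set" where
  "hsum xs = hsum_rev (rev xs)"

definition spoly :: "(nat \<Rightarrow> sgn) set" where
  "spoly = {c. finite {i. c i \<noteq> SZ}}"

definition sdeg :: "(nat \<Rightarrow> sgn) \<Rightarrow> nat" where
  "sdeg c = (if {i. c i \<noteq> SZ} = {} then 0 else Max {i. c i \<noteq> SZ})"

definition smonic :: "(nat \<Rightarrow> sgn) \<Rightarrow> bool" where
  "smonic c \<longleftrightarrow> c (sdeg c) = SP"

definition shprod :: "(nat \<Rightarrow> sgn) \<Rightarrow> (nat \<Rightarrow> sgn) \<Rightarrow> (nat \<Rightarrow> sgn) set" where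
  "shprod c d = {e. e \<in> spoly \<and>
     (\<forall>i. e i \<in> hsum (map (\<lambda>k. smul (c k) (d (i - k))) [0..<Suc i]))}"

definition sconst :: "sgn \<Rightarrow> (nat \<Rightarrow> sgn)" where
  "sconst a = (\<lambda>i. if i = 0 then a else SZ)"

definition ssim :: "(nat \<Rightarrow> sgn) \<Rightarrow> (nat \<Rightarrow> sgn) \<Rightarrow> bool" where
  "ssim p q \<longleftrightarrow> (\<exists>a\<in>{SP, SN}. p \<in> shprod (sconst a) q)"

definition sirred :: "(nat \<Rightarrow> sgn) \<Rightarrow> bool" where
  "sirred p \<longleftrightarrow> p \<in> spoly \<and> sdeg p \<ge> 1 \<and>
     (\<forall>q1\<in>spoly. \<forall>q2\<in>spoly. p \<in> shprod q1 q2 \<longrightarrow> ssim p q1 \<or> ssim p q2)"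

definition polyT :: "nat \<Rightarrow> sgn" where
  "polyT = (\<lambda>i. if i = 1 then SP else SZ)"
definition polyTm1 :: "nat \<Rightarrow> sgn" where
  "polyTm1 = (\<lambda>i. if i = 1 then SP else if i = 0 then SN else SZ)"
definition polyTp1 :: "nat \<Rightarrow> sgn" where
  "polyTp1 = (\<lambda>i. if i = 1 then SP else if i = 0 then SP else SZ)"
definition polyT2p1 :: "nat \<Rightarrow> sgn" where
  "polyT2p1 = (\<lambda>i. if i = 2 then SP else if i = 0 then SP else SZ)"

end

theory Submission
  imports Defs
begin


definition hs :: "sgn set \<Rightarrow> sgn set" where
  "hs S = (if SP \<in> S \<and> SN \<in> S then UNIV else if SP \<in> S then {SP}
           else if SN \<in> S then {SN} else {SZ})"

lemma sgn_UNIV: "UNIV = {SZ, SP, SN}"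
  by (auto intro: sgn.exhaust)

lemma hadd_hs: "(\<Union>b\<in>hs S. hadd b a) = hs (insert a S)"
  by (cases a) (auto simp: hs_def sgn_UNIV)

lemma hsum_rev_hs: "hsum_rev xs = hs (set xs)"
proof (induction xs)
  case Nil then show ?case by (simp add: hs_def)
next
  case (Cons a xs) then show ?case by (simp add: hadd_hs)
qed

lemma hsum_hs: "hsum xs = hs (set xs)"
  by (simp add: hsum_def hsum_rev_hs)

lemma shprod_iff: "e \<in> shprod c d \<longleftrightarrow> e \<in> spoly \<and>
   (\<forall>i. e i \<in> hs ((\<lambda>k. smul (c k) (d (i-k))) ` {..i}))"
  unfolding shprod_def hsum_hs set_map set_upt atLeast0LessThan lessThan_Suc_atMost by simp

lemma hs_cong: "(SP\<in>A \<longleftrightarrow> SP\<in>B) \<Longrightarrow> (SN\<in>A \<longleftrightarrow> SN\<in>B) \<Longrightarrow> hs A = hs B"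
  by (simp add: hs_def)

lemma smul_comm: "smul a b = smul b a"
  by (cases a; cases b) auto

lemma smul_SZ2[simp]: "smul a SZ = SZ"
  by (cases a) auto

lemma smul_SP2[simp]: "smul a SP = a"
  by (cases a) auto

lemma smul_nz: "smul a b = SZ \<longleftrightarrow> a = SZ \<or> b = SZ"
  by (cases a; cases b) auto

lemma shprod_comm: "shprod c d = shprod d c"
proof -
  have img: "\<And>i. (\<lambda>k. smul (c k) (d (i-k))) ` {..i} = (\<lambda>k. smul (d k) (c (i-k))) ` {..i}"
  proof -
    fix i
    have "(\<lambda>k. smul (d k) (c (i-k))) ` {..i} = (\<lambda>k. smul (c k) (d (i-k))) ` ((\<lambda>k. i - k) ` {..i})"
      unfolding image_image by (rule image_cong) (auto simp: smul_comm)
    moreover have "(\<lambda>k. i - k) ` {..i} = {..i}"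
    proof
      show "(\<lambda>k. i - k) ` {..i} \<subseteq> {..i}" by auto
      show "{..i} \<subseteq> (\<lambda>k. i - k) ` {..i}"
      proof
        fix x assume "x \<in> {..i}" then have "x = i - (i - x)" "i - x \<in> {..i}" by auto
        then show "x \<in> (\<lambda>k. i - k) ` {..i}" by blast
      qed
    qed
    ultimately show "?thesis i" by simp
  qed
  show ?thesis by (rule set_eqI) (simp only: shprod_iff img)
qed

lemma shprod_small:
  assumes "\<forall>k>m. f k = SZ"
  shows "e \<in> shprod f q \<longleftrightarrow> e \<in> spoly \<and>
     (\<forall>i. e i \<in> hs ((\<lambda>k. smul (f k) (q (i-k))) ` {..min i m}))"
proof -
  have "\<And>i. hs ((\<lambda>k. smul (f k) (q (i-k))) ` {..i}) = hs ((\<lambda>k. smul (f k) (q (i-k))) ` {..min i m})"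
  proof (rule hs_cong)
    fix i
    have key: "\<And>v. v \<noteq> SZ \<Longrightarrow> (v \<in> (\<lambda>k. smul (f k) (q (i-k))) ` {..i}) = (v \<in> (\<lambda>k. smul (f k) (q (i-k))) ` {..min i m})"
    proof
      fix v assume v: "v \<noteq> SZ" "v \<in> (\<lambda>k. smul (f k) (q (i-k))) ` {..i}"
      then obtain k where k: "k \<le> i" "v = smul (f k) (q (i-k))" by auto
      have "k \<le> m" proof (rule ccontr)
        assume "\<not> k \<le> m" then have "f k = SZ" using assms by auto
        then show False using k v by simp
      qed
      then show "v \<in> (\<lambda>k. smul (f k) (q (i-k))) ` {..min i m}" using k by auto
    next
      fix v assume "v \<in> (\<lambda>k. smul (f k) (q (i-k))) ` {..min i m}"
      then show "v \<in> (\<lambda>k. smul (f k) (q (i-k))) ` {..i}" by auto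
    qed
    show "(SP \<in> (\<lambda>k. smul (f k) (q (i-k))) ` {..i}) = (SP \<in> (\<lambda>k. smul (f k) (q (i-k))) ` {..min i m})"
      by (rule key) simp
    show "(SN \<in> (\<lambda>k. smul (f k) (q (i-k))) ` {..i}) = (SN \<in> (\<lambda>k. smul (f k) (q (i-k))) ` {..min i m})"
      by (rule key) simp
  qed
  then show ?thesis unfolding shprod_iff by simp
qed

lemma all_nat_split: "(\<forall>i::nat. P i) = (P 0 \<and> (\<forall>i. P (Suc i)))"
  by (metis not0_implies_Suc)

lemma hs_single[simp]: "hs {x} = {x}"
  by (cases x) (auto simp: hs_def)

lemma shprod_deg0:
  assumes "\<forall>k>0. f k = SZ"
  shows "e \<in> shprod f q \<longleftrightarrow> e \<in> spoly \<and> (\<forall>i. e i = smul (f 0) (q i))"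
  using shprod_small[OF assms] by simp

lemma shprod_deg1:
  assumes "\<forall>k>1. f k = SZ"
  shows "e \<in> shprod f q \<longleftrightarrow> e \<in> spoly \<and> e 0 \<in> hs {smul (f 0) (q 0)} \<and>
     (\<forall>i. e (Suc i) \<in> hs {smul (f 0) (q (Suc i)), smul (f 1) (q i)})"
proof -
  have "\<And>i. {..min (Suc i) 1} = {0, 1::nat}" by auto
  then show ?thesis
    using shprod_small[OF assms, of e q] all_nat_split[of "\<lambda>i. e i \<in> _ i"] by simp
qed

lemma shprod_deg2:
  assumes "\<forall>k>2. f k = SZ"
  shows "e \<in> shprod f q \<longleftrightarrow> e \<in> spoly \<and> e 0 \<in> hs {smul (f 0) (q 0)} \<and>
     e 1 \<in> hs {smul (f 0) (q 1), smul (f 1) (q 0)} \<and>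
     (\<forall>i. e (Suc (Suc i)) \<in> hs {smul (f 0) (q (Suc (Suc i))), smul (f 1) (q (Suc i)), smul (f 2) (q i)})"
proof -
  have "\<And>i. {..min (Suc (Suc i)) 2} = {0, 1, 2::nat}" by auto
  moreover have "{..min (Suc 0) 2} = {0, 1::nat}" by auto
  ultimately show ?thesis
    using shprod_small[OF assms, of e q] all_nat_split[of "\<lambda>i. e i \<in> _ i"]
      all_nat_split[of "\<lambda>i. e (Suc i) \<in> _ i"] by (simp add: numeral_2_eq_2)
qed



lemma spolyI: "\<forall>i>N. q i = SZ \<Longrightarrow> q \<in> spoly"
  unfolding spoly_def by (rule CollectI, rule finite_subset[of _ "{..N}"]) (auto simp: not_le[symmetric])

lemma sdeg_gt: "c \<in> spoly \<Longrightarrow> sdeg c < i \<Longrightarrow> c i = SZ"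
proof (rule ccontr)
  assume c: "c \<in> spoly" "sdeg c < i" "c i \<noteq> SZ"
  then have "finite {i. c i \<noteq> SZ}" "i \<in> {i. c i \<noteq> SZ}" by (auto simp: spoly_def)
  then have "i \<le> Max {i. c i \<noteq> SZ}" by (rule Max_ge)
  then show False using c unfolding sdeg_def by (auto split: if_splits)
qed

lemma sdeg_lead: "c \<in> spoly \<Longrightarrow> c i \<noteq> SZ \<Longrightarrow> c (sdeg c) \<noteq> SZ"
proof -
  assume c: "c \<in> spoly" "c i \<noteq> SZ"
  then have f: "finite {i. c i \<noteq> SZ}" and ne: "{i. c i \<noteq> SZ} \<noteq> {}" by (auto simp: spoly_def)
  have "Max {i. c i \<noteq> SZ} \<in> {i. c i \<noteq> SZ}" using Max_in[OF f ne] .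
  then show ?thesis using ne unfolding sdeg_def by simp
qed

lemma sdeg_eqI: "c n \<noteq> SZ \<Longrightarrow> \<forall>i>n. c i = SZ \<Longrightarrow> sdeg c = n"
proof -
  assume a: "c n \<noteq> SZ" "\<forall>i>n. c i = SZ"
  have "Max {i. c i \<noteq> SZ} = n"
    by (rule Max_eqI) (use a spolyI[of n c] in \<open>auto simp: spoly_def not_le[symmetric]\<close>)
  then show ?thesis using a unfolding sdeg_def by auto
qed

lemma sdeg_zero: "sdeg c = 0 \<Longrightarrow> c \<in> spoly \<Longrightarrow> c = sconst (c 0)"
  by (rule ext) (auto simp: sconst_def intro: sdeg_gt)

lemma shprod_zero: "e \<in> shprod c d \<Longrightarrow> (\<forall>i. c i = SZ) \<Longrightarrow> e i = SZ"
  using shprod_deg0[of c e d] by auto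

lemma shprod_deg:
  assumes c: "c \<in> spoly" "c a \<noteq> SZ" and d: "d \<in> spoly" "d b \<noteq> SZ" and e: "e \<in> shprod c d"
  shows "sdeg e = sdeg c + sdeg d"
proof (rule sdeg_eqI)
  let ?a = "sdeg c" and ?b = "sdeg d"
  have ca: "c ?a \<noteq> SZ" using sdeg_lead c by blast
  have db: "d ?b \<noteq> SZ" using sdeg_lead d by blast
  have E: "\<And>i. e i \<in> hs ((\<lambda>k. smul (c k) (d (i-k))) ` {..i})" using e shprod_iff by blast
  have z: "smul (c k) (d (i-k)) = SZ" if "k \<le> i" "i \<ge> ?a + ?b" "k \<noteq> ?a \<or> i \<noteq> ?a + ?b" for k i
  proof (cases "k \<le> ?a")
    case True
    then have "i - k > ?b" using that by auto
    then show ?thesis using sdeg_gt[OF d(1)] by simp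
  next
    case False
    then show ?thesis using sdeg_gt[OF c(1)] by simp
  qed
  let ?i = "?a + ?b"
  have "(\<lambda>k. smul (c k) (d (?i-k))) ` {..?i} \<subseteq> {SZ, smul (c ?a) (d ?b)}"
  proof
    fix x assume "x \<in> (\<lambda>k. smul (c k) (d (?i-k))) ` {..?i}"
    then obtain k where k: "k \<le> ?i" "x = smul (c k) (d (?i-k))" by auto
    show "x \<in> {SZ, smul (c ?a) (d ?b)}"
    proof (cases "k = ?a")
      case True then show ?thesis using k by simp
    next
      case False then show ?thesis using k z[of k ?i] by simp
    qed
  qed
  moreover have "smul (c ?a) (d ?b) \<in> (\<lambda>k. smul (c k) (d (?i-k))) ` {..?i}"
    by (rule image_eqI[of _ _ ?a]) auto
  moreover have v: "smul (c ?a) (d ?b) \<noteq> SZ" using ca db smul_nz by blast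
  ultimately have "hs ((\<lambda>k. smul (c k) (d (?i-k))) ` {..?i}) = {smul (c ?a) (d ?b)}"
    by (cases "smul (c ?a) (d ?b)") (auto simp: hs_def)
  then show "e ?i \<noteq> SZ" using E[of ?i] v by auto
  show "\<forall>i>?i. e i = SZ"
  proof (intro allI impI)
    fix i assume "i > ?i"
    then have "(\<lambda>k. smul (c k) (d (i-k))) ` {..i} = {SZ}" using z by auto
    then show "e i = SZ" using E[of i] by simp
  qed
qed

lemma ssim_iff: "ssim p q \<longleftrightarrow> p \<in> spoly \<and> (\<exists>a\<in>{SP,SN}. p = (\<lambda>i. smul a (q i)))"
proof -
  have "\<And>a. \<forall>k>0. sconst a k = SZ" by (simp add: sconst_def)
  then show ?thesis unfolding ssim_def using shprod_deg0 by (auto simp: sconst_def)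
qed

lemma ssim_top: "ssim p q \<Longrightarrow> q n = SZ \<Longrightarrow> p n = SZ"
  by (auto simp: ssim_iff)

lemma factor_const:
  assumes "q1 \<in> spoly" "q1 0 \<noteq> SZ" "sdeg q1 = 0" "p \<in> shprod q1 q2"
  shows "ssim p q2"
proof -
  have "q1 = sconst (q1 0)" using sdeg_zero assms by blast
  moreover have "q1 0 \<in> {SP, SN}" using assms(2) by (cases "q1 0") auto
  ultimately show ?thesis unfolding ssim_def using assms(4) by metis
qed

lemma deg1_irred:
  assumes p: "p \<in> spoly" "sdeg p = 1"
  shows "sirred p"
  unfolding sirred_def
proof (intro conjI ballI impI)
  show "p \<in> spoly" "1 \<le> sdeg p" using p by auto
  have "\<exists>i. p i \<noteq> SZ"
  proof (rule ccontr)
    assume "\<not> (\<exists>i. p i \<noteq> SZ)" then have "sdeg p = 0" unfolding sdeg_def by auto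
    then show False using p by simp
  qed
  then have p1: "p 1 \<noteq> SZ" using p sdeg_lead[of p] by auto
  fix q1 q2 assume q: "q1 \<in> spoly" "q2 \<in> spoly" "p \<in> shprod q1 q2"
  have n1: "\<exists>i. q1 i \<noteq> SZ"
    using shprod_zero[OF q(3)] p1 by blast
  have n2: "\<exists>i. q2 i \<noteq> SZ"
    using shprod_zero[of p q2 q1] q(3) shprod_comm p1 by blast
  obtain a b where ab: "q1 a \<noteq> SZ" "q2 b \<noteq> SZ" using n1 n2 by blast
  have s: "sdeg q1 + sdeg q2 = 1" using shprod_deg[OF q(1) ab(1) q(2) ab(2) q(3)] p by simp
  show "ssim p q1 \<or> ssim p q2"
  proof (cases "sdeg q1 = 0")
    case True
    then have "q1 0 \<noteq> SZ" using sdeg_lead[OF q(1) ab(1)] by simp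
    then show ?thesis using factor_const[OF q(1) _ True q(3)] by blast
  next
    case False
    then have "sdeg q2 = 0" using s by simp
    moreover have "q2 0 \<noteq> SZ" using sdeg_lead[OF q(2) ab(2)] calculation by simp
    ultimately show ?thesis using factor_const[OF q(2)] q(3) shprod_comm by metis
  qed
qed



lemma T2p1_irred: "sirred polyT2p1"
  unfolding sirred_def
proof (intro conjI ballI impI)
  let ?p = polyT2p1
  show ps: "?p \<in> spoly" by (rule spolyI[of 2]) (simp add: polyT2p1_def)
  have d2: "sdeg ?p = 2" by (rule sdeg_eqI) (auto simp: polyT2p1_def)
  then show "1 \<le> sdeg ?p" by simp
  have p2: "?p 2 \<noteq> SZ" by (simp add: polyT2p1_def)
  fix q1 q2 assume q: "q1 \<in> spoly" "q2 \<in> spoly" "?p \<in> shprod q1 q2"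
  have n1: "\<exists>i. q1 i \<noteq> SZ"
    using shprod_zero[OF q(3)] p2 by blast
  have n2: "\<exists>i. q2 i \<noteq> SZ"
    using shprod_zero[of ?p q2 q1] q(3) shprod_comm p2 by blast
  obtain a b where ab: "q1 a \<noteq> SZ" "q2 b \<noteq> SZ" using n1 n2 by blast
  have s: "sdeg q1 + sdeg q2 = 2" using shprod_deg[OF q(1) ab(1) q(2) ab(2) q(3)] d2 by simp
  have l1: "q1 (sdeg q1) \<noteq> SZ" using sdeg_lead[OF q(1) ab(1)] .
  have l2: "q2 (sdeg q2) \<noteq> SZ" using sdeg_lead[OF q(2) ab(2)] .
  show "ssim ?p q1 \<or> ssim ?p q2"
  proof (cases "sdeg q1 = 0")
    case True
    then show ?thesis using factor_const[OF q(1) _ True q(3)] l1 by simp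
  next
    case F1: False
    show ?thesis
    proof (cases "sdeg q2 = 0")
      case True
      then show ?thesis using factor_const[OF q(2) _ True] q(3) shprod_comm l2 by metis
    next
      case False
      then have d1: "sdeg q1 = 1" "sdeg q2 = 1" using s F1 by auto
      have z1: "\<forall>k>1. q1 k = SZ" using sdeg_gt[OF q(1)] d1 by simp
      have z2: "q2 2 = SZ" using sdeg_gt[OF q(2)] d1 by simp
      have a1: "q1 1 \<noteq> SZ" "q2 1 \<noteq> SZ" using l1 l2 d1 by auto
      have E: "?p 0 \<in> hs {smul (q1 0) (q2 0)}" "?p 1 \<in> hs {smul (q1 0) (q2 1), smul (q1 1) (q2 0)}"
         "?p 2 \<in> hs {smul (q1 0) (q2 2), smul (q1 1) (q2 1)}"
        using q(3) shprod_deg1[OF z1, of ?p q2] by (auto simp: numeral_2_eq_2)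
      then have False using a1 z2
        by (cases "q1 0"; cases "q1 1"; cases "q2 0"; cases "q2 1") (auto simp: hs_def polyT2p1_def)
      then show ?thesis ..
    qed
  qed
qed

lemma notirr:
  assumes "q1 \<in> spoly" "q2 \<in> spoly" "p \<in> shprod q1 q2" "q1 n = SZ" "q2 n = SZ" "p n \<noteq> SZ"
  shows "\<not> sirred p"
  using assms ssim_top unfolding sirred_def by blast

lemma smul_SP1[simp]: "smul SP b = b" by (cases b) auto
lemma smul_SN_SN[simp]: "smul SN SN = SP" by simp

lemma red_T:
  assumes "p \<in> spoly" "p 0 = SZ"
  shows "p \<in> shprod polyT (\<lambda>i. p (Suc i))"
proof -
  have z: "\<forall>k>1. polyT k = SZ" by (simp add: polyT_def)
  show ?thesis unfolding shprod_deg1[OF z]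
    apply (intro conjI allI)
      apply (rule assms)
     apply (simp add: assms polyT_def)
    subgoal for i by (cases "p (Suc i)") (auto simp: polyT_def hs_def)
    done
qed

lemma red_Tm1_SN:
  assumes "p \<in> spoly" "p 0 = SN" "p n = SP" "\<forall>i>n. p i = SZ"
  shows "p \<in> shprod polyTm1 (\<lambda>i. if i < n then SP else SZ)"
proof -
  have z: "\<forall>k>1. polyTm1 k = SZ" by (simp add: polyTm1_def)
  have n: "0 < n" using assms by (cases n) auto
  show ?thesis unfolding shprod_deg1[OF z]
    apply (intro conjI allI)
      apply (rule assms)
     apply (simp add: assms polyTm1_def n)
    subgoal for i
    proof -
      consider "Suc i < n" | "Suc i = n" | "Suc i > n" by linarith
      then show ?thesis using assms by cases (auto simp: hs_def polyTm1_def)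
    qed
    done
qed

lemma red_Tp1_odd:
  assumes "p \<in> spoly" "p 0 = SP" "p n = SP" "\<forall>i>n. p i = SZ" "odd n"
  shows "p \<in> shprod polyTp1 (\<lambda>i. if i < n then (if even i then SP else SN) else SZ)"
proof -
  have z: "\<forall>k>1. polyTp1 k = SZ" by (simp add: polyTp1_def)
  have n: "0 < n" using assms by (cases n) auto
  show ?thesis unfolding shprod_deg1[OF z]
    apply (intro conjI allI)
      apply (rule assms)
     apply (simp add: assms polyTp1_def n)
    subgoal for i
    proof -
      consider "Suc i < n" | "Suc i = n" | "Suc i > n" by linarith
      then show ?thesis using assms by cases (auto simp: hs_def polyTp1_def)
    qed
    done
qed

lemma red_quad:
  assumes "p \<in> spoly" "p 0 = SP" "p n = SP" "\<forall>i>n. p i = SZ" "even n" "n \<ge> 4"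
  shows "p \<in> shprod (\<lambda>i. if i \<le> 2 then SP else SZ)
                      (\<lambda>i. if i < n - 1 then (if even i then SP else SN) else SZ)"
  (is "p \<in> shprod ?g ?q")
proof -
  have "\<forall>k>2. ?g k = SZ" by simp
  moreover have "\<And>i. p (Suc (Suc i)) \<in> hs {?q (Suc (Suc i)), ?q (Suc i), ?q i}"
  proof -
    fix i
    consider "Suc i < n - 1" | "Suc i = n - 1" | "Suc i > n - 1" by linarith
    then show "?thesis i"
    proof cases
      case 1 then show ?thesis by (auto simp: hs_def)
    next
      case 2
      obtain k where k: "n = 2*k" using assms(5) by (auto elim!: evenE)
      then have "i = 2*(k-1)" using 2 by linarith
      then have "Suc (Suc i) = n" "even i" using 2 assms by auto
      then show ?thesis using assms 2 by (auto simp: hs_def)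
    next
      case 3 then show ?thesis using assms by (auto simp: hs_def)
    qed
  qed
  moreover have "p 1 \<in> hs {?q 1, ?q 0}" using assms by (auto simp: hs_def)
  moreover have "p 0 \<in> hs {?q 0}" using assms by auto
  ultimately show ?thesis using assms by (simp add: shprod_deg2)
qed



lemma red_n2:
  assumes "p \<in> spoly" "p 0 = SP" "p 2 = SP" "\<forall>i>2. p i = SZ" "s \<noteq> SZ" "p 1 = s"
  shows "p \<in> shprod (\<lambda>i. if i = 1 then SP else if i = 0 then s else SZ)
                     (\<lambda>i. if i = 1 then SP else if i = 0 then s else SZ)"
proof -
  have z: "\<forall>k>1. (\<lambda>i::nat. if i = 1 then SP else if i = 0 then s else SZ) k = SZ" by auto
  show ?thesis unfolding shprod_deg1[OF z]
    apply (intro conjI allI)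
      apply (rule assms)
     apply (cases s; simp add: assms)
    subgoal for i
    proof -
      consider "i = 0" | "i = 1" | "i > 1" by linarith
      then show ?thesis
      proof cases
        case 1 then show ?thesis using assms by (cases s) (auto simp: hs_def)
      next
        case 2 then show ?thesis using assms by (simp add: hs_def numeral_2_eq_2)
      next
        case 3 then show ?thesis using assms by (simp add: hs_def)
      qed
    qed
    done
qed

lemma lead_nz: "p \<in> spoly \<Longrightarrow> sdeg p \<ge> 1 \<Longrightarrow> p (sdeg p) \<noteq> SZ"
proof -
  assume p: "p \<in> spoly" "sdeg p \<ge> 1"
  have "\<exists>i. p i \<noteq> SZ"
  proof (rule ccontr)
    assume "\<not> (\<exists>i. p i \<noteq> SZ)" then have "sdeg p = 0" unfolding sdeg_def by auto
    then show False using p by simp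
  qed
  then show ?thesis using p sdeg_lead[of p] by auto
qed

lemma red_main:
  assumes p: "p \<in> spoly" "smonic p" "sdeg p \<ge> 2" "p \<noteq> polyT2p1"
  shows "\<not> sirred p"
proof -
  define n where "n = sdeg p"
  have pn: "p n = SP" using p n_def smonic_def by simp
  have hz: "\<forall>i>n. p i = SZ" using sdeg_gt[OF p(1)] n_def by simp
  have n2: "n \<ge> 2" using p n_def by simp
  have pnz: "p n \<noteq> SZ" using pn by simp
  show ?thesis
  proof (cases "p 0")
    case SZ
    show ?thesis
      apply (rule notirr[OF _ _ red_T[OF p(1) SZ] _ _ pnz])
      using n2 hz by (auto intro!: spolyI[of 1] spolyI[of n] simp: polyT_def)
  next
    case SN
    show ?thesis
      apply (rule notirr[OF _ _ red_Tm1_SN[OF p(1) SN pn hz] _ _ pnz])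
      using n2 by (auto intro!: spolyI[of 1] spolyI[of n] simp: polyTm1_def)
  next
    case SP
    show ?thesis
    proof (cases "odd n")
      case True
      show ?thesis
        apply (rule notirr[OF _ _ red_Tp1_odd[OF p(1) SP pn hz True] _ _ pnz])
        using n2 by (auto intro!: spolyI[of 1] spolyI[of n] simp: polyTp1_def)
    next
      case ev: False
      show ?thesis
      proof (cases "n = 2")
        case True
        have p2: "p 2 = SP" using pn True by simp
        have hz2: "\<forall>i>2. p i = SZ" using hz True by simp
        show ?thesis
        proof (cases "p 1 = SZ")
          case True
          have "p = polyT2p1"
          proof
            fix i
            consider "i = 0" | "i = 1" | "i = 2" | "i > (2::nat)" by linarith
            then show "p i = polyT2p1 i" using SP True p2 hz2 by cases (auto simp: polyT2p1_def)
          qed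
          then show ?thesis using p by simp
        next
          case False
          show ?thesis
            apply (rule notirr[OF _ _ red_n2[OF p(1) SP p2 hz2 False refl] _ _ pnz])
            using n2 \<open>n = 2\<close> by (auto intro!: spolyI[of 1])
        qed
      next
        case False
        then have n4: "n \<ge> 4" using ev n2 by presburger
        show ?thesis
          apply (rule notirr[OF _ _ red_quad[OF p(1) SP pn hz _ n4] _ _ pnz])
          using ev n4 by (auto intro!: spolyI[of 2] spolyI[of n])
      qed
    qed
  qed
qed

lemma list_irred: "p \<in> {polyT, polyTm1, polyTp1, polyT2p1} \<Longrightarrow> sirred p"
proof -
  have "sirred polyT"
    by (rule deg1_irred) (auto intro!: spolyI[of 1] sdeg_eqI simp: polyT_def)
  moreover have "sirred polyTm1"
    by (rule deg1_irred) (auto intro!: spolyI[of 1] sdeg_eqI simp: polyTm1_def)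
  moreover have "sirred polyTp1"
    by (rule deg1_irred) (auto intro!: spolyI[of 1] sdeg_eqI simp: polyTp1_def)
  ultimately show "p \<in> {polyT, polyTm1, polyTp1, polyT2p1} \<Longrightarrow> sirred p"
    using T2p1_irred by auto
qed

lemma monic_class:
  assumes p: "p \<in> spoly" "smonic p"
  shows "sirred p \<longleftrightarrow> p \<in> {polyT, polyTm1, polyTp1, polyT2p1}"
proof
  assume "p \<in> {polyT, polyTm1, polyTp1, polyT2p1}" then show "sirred p" by (rule list_irred)
next
  assume irr: "sirred p"
  then have d: "sdeg p \<ge> 1" by (simp add: sirred_def)
  show "p \<in> {polyT, polyTm1, polyTp1, polyT2p1}"
  proof (cases "sdeg p = 1")
    case True
    have p1: "p 1 = SP" using p True smonic_def by simp
    have hz: "\<forall>i>1. p i = SZ" using sdeg_gt[OF p(1)] True by simp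
    have "p = polyT \<or> p = polyTm1 \<or> p = polyTp1"
    proof (cases "p 0")
      case SZ
      have "p = polyT"
      proof fix i show "p i = polyT i" using SZ p1 hz by (cases "i = 0"; cases "i = 1") (auto simp: polyT_def) qed
      then show ?thesis by simp
    next
      case SN
      have "p = polyTm1"
      proof fix i show "p i = polyTm1 i" using SN p1 hz by (cases "i = 0"; cases "i = 1") (auto simp: polyTm1_def) qed
      then show ?thesis by simp
    next
      case SP
      have "p = polyTp1"
      proof fix i show "p i = polyTp1 i" using SP p1 hz by (cases "i = 0"; cases "i = 1") (auto simp: polyTp1_def) qed
      then show ?thesis by simp
    qed
    then show ?thesis by auto
  next
    case False
    then have "sdeg p \<ge> 2" using d by simp
    then have "p = polyT2p1" using red_main[OF p] irr by blast
    then show ?thesis by simp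
  qed
qed

definition sneg :: "(nat \<Rightarrow> sgn) \<Rightarrow> (nat \<Rightarrow> sgn)" where
  "sneg p = (\<lambda>i. smul SN (p i))"

lemma smul_SN_SN_x[simp]: "smul SN (smul SN x) = x" by (cases x) auto
lemma smul_SN_eq[simp]: "smul SN y = SP \<longleftrightarrow> y = SN" "smul SN y = SN \<longleftrightarrow> y = SP"
  "smul SN y = SZ \<longleftrightarrow> y = SZ"
  by (cases y; simp)+

lemma sneg_sneg[simp]: "sneg (sneg p) = p" by (simp add: sneg_def)

lemma sneg_supp: "{i. sneg p i \<noteq> SZ} = {i. p i \<noteq> SZ}" by (simp add: sneg_def)

lemma sneg_spoly: "p \<in> spoly \<Longrightarrow> sneg p \<in> spoly"
  unfolding spoly_def using sneg_supp by simp

lemma sneg_sdeg: "sdeg (sneg p) = sdeg p"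
  unfolding sdeg_def sneg_supp ..

lemma hs_neg: "x \<in> hs S \<Longrightarrow> smul SN x \<in> hs (smul SN ` S)"
proof -
  have a: "SP \<in> smul SN ` S \<longleftrightarrow> SN \<in> S" "SN \<in> smul SN ` S \<longleftrightarrow> SP \<in> S"
    by (auto simp: image_iff) (metis smul_SN_eq)+
  assume "x \<in> hs S" then show ?thesis unfolding hs_def a by (cases x) (auto split: if_splits)
qed

lemma smul_SN_comm: "smul a (smul SN x) = smul SN (smul a x)"
  by (cases a; cases x) auto

lemma shprod_neg: "e \<in> shprod c d \<Longrightarrow> sneg e \<in> shprod c (sneg d)"
proof -
  assume e: "e \<in> shprod c d"
  have "\<And>i. (\<lambda>k. smul (c k) (sneg d (i-k))) ` {..i} = smul SN ` ((\<lambda>k. smul (c k) (d (i-k))) ` {..i})"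
    unfolding image_image sneg_def by (rule image_cong) (rule refl, rule smul_SN_comm)
  then show ?thesis using e sneg_spoly hs_neg unfolding shprod_iff by (simp add: sneg_def)
qed

lemma ssim_neg1: "ssim p q \<Longrightarrow> ssim (sneg p) q"
proof -
  assume "ssim p q"
  then obtain a where a: "p \<in> spoly" "a \<in> {SP, SN}" "p = (\<lambda>i. smul a (q i))"
    unfolding ssim_iff by blast
  show ?thesis unfolding ssim_iff
  proof (intro conjI)
    show "sneg p \<in> spoly" using a sneg_spoly by blast
    show "\<exists>a\<in>{SP, SN}. sneg p = (\<lambda>i. smul a (q i))"
    proof (cases "a = SP")
      case True
      then show ?thesis using a by (intro bexI[of _ SN]) (auto simp: sneg_def)
    next
      case False
      then have "a = SN" using a by auto
      then show ?thesis using a by (intro bexI[of _ SP]) (auto simp: sneg_def)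
    qed
  qed
qed

lemma ssim_neg2: "ssim p (sneg q) \<Longrightarrow> ssim (sneg p) q"
proof -
  assume "ssim p (sneg q)"
  then obtain a where a: "p \<in> spoly" "a \<in> {SP, SN}" "p = (\<lambda>i. smul a (sneg q i))"
    unfolding ssim_iff by blast
  show ?thesis unfolding ssim_iff
  proof (intro conjI)
    show "sneg p \<in> spoly" using a sneg_spoly by blast
    have "sneg p = (\<lambda>i. smul a (q i))"
    proof
      fix i show "sneg p i = smul a (q i)" using a by (cases a; cases "q i") (auto simp: sneg_def)
    qed
    then show "\<exists>a\<in>{SP, SN}. sneg p = (\<lambda>i. smul a (q i))" using a by blast
  qed
qed

lemma sirred_neg: "sirred p \<Longrightarrow> sirred (sneg p)"
  unfolding sirred_def
proof (intro conjI ballI impI)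
  assume p: "p \<in> spoly \<and> 1 \<le> sdeg p \<and> (\<forall>q1\<in>spoly. \<forall>q2\<in>spoly. p \<in> shprod q1 q2 \<longrightarrow> ssim p q1 \<or> ssim p q2)"
  show "sneg p \<in> spoly" using p sneg_spoly by blast
  show "1 \<le> sdeg (sneg p)" using p sneg_sdeg by simp
  fix q1 q2 assume q: "q1 \<in> spoly" "q2 \<in> spoly" "sneg p \<in> shprod q1 q2"
  have "p \<in> shprod q1 (sneg q2)" using shprod_neg[OF q(3)] by simp
  then have "ssim p q1 \<or> ssim p (sneg q2)" using p q sneg_spoly by blast
  then show "ssim (sneg p) q1 \<or> ssim (sneg p) q2" using ssim_neg1 ssim_neg2 by blast
qed

theorem mainTheorem9:
  shows "(\<forall>p\<in>spoly. smonic p \<longrightarrow>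
            (sirred p \<longleftrightarrow> p \<in> {polyT, polyTm1, polyTp1, polyT2p1}))
       \<and> (\<forall>p\<in>spoly. sirred p \<longrightarrow>
            (\<exists>a\<in>{SP, SN}. \<exists>m\<in>{polyT, polyTm1, polyTp1, polyT2p1}.
               p = (\<lambda>i. smul a (m i))))"
proof (intro conjI ballI impI)
  fix p assume "p \<in> spoly" "smonic p"
  then show "sirred p \<longleftrightarrow> p \<in> {polyT, polyTm1, polyTp1, polyT2p1}" by (rule monic_class)
next
  fix p assume p: "p \<in> spoly" "sirred p"
  then have l: "p (sdeg p) \<noteq> SZ" using lead_nz sirred_def by blast
  show "\<exists>a\<in>{SP, SN}. \<exists>m\<in>{polyT, polyTm1, polyTp1, polyT2p1}. p = (\<lambda>i. smul a (m i))"
  proof (cases "p (sdeg p)")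
    case SZ then show ?thesis using l by simp
  next
    case SP
    then have "p \<in> {polyT, polyTm1, polyTp1, polyT2p1}" using monic_class[OF p(1)] p(2) smonic_def by blast
    then show ?thesis by (intro bexI[of _ SP] bexI[of _ p]) auto
  next
    case SN
    have m: "smonic (sneg p)" using SN by (simp add: smonic_def sneg_sdeg) (simp add: sneg_def)
    have "sneg p \<in> {polyT, polyTm1, polyTp1, polyT2p1}"
      using monic_class[OF sneg_spoly[OF p(1)] m] sirred_neg[OF p(2)] by blast
    moreover have "p = (\<lambda>i. smul SN (sneg p i))" by (simp add: sneg_def)
    ultimately show ?thesis by blast
  qed
qed


end
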